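(* The constant allocation $s\equiv\tfrac12$ maximizes $W_0(s)=\int_0^{\bar\theta}\frac{1-F(\theta)}{f(\theta)}s(\theta)\,dF(\theta)$ over $\mathcal S(0)$ if and only if $$\int_0^\theta\Big(\frac{1-F(x)}{f(x)}-\mathbb E[\theta]\Big)dF(x)\ \ge\ 0\qquad\text{for all }\theta\in[0,\bar\theta],$$ where $\mathbb E[\theta]=\int_0^{\bar\theta}x\,dF(x)$.
   Context: Let $0<\bar\theta<\infty$, $\Theta=[0,\bar\theta]$, $F$ a cdf on $\Theta$ with continuous, strictly positive density $f$, $dF=f\,d\theta$. For bounded measurable $a,b$ on $\Theta$, write $b\in\mathrm{MPS}(a)$ if $\int_x^{\bar\theta}b\,dF\le\int_x^{\bar\theta}a\,dF$ for all $x\in\Theta$, with equality at $x=0$. $\mathcal S(0)$ is the set of nondecreasing $s:\Theta\to[0,1]$ with $s\in\mathrm{MPS}(F)$ (feasible interim statuses when exclusion is impossible). $s\equiv\frac12$ corresponds to offering a single (free) level. *)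

theory Defs
  imports "HOL-Analysis.Analysis"
begin

text \<open>Type space Theta = [0, thbar]; the distribution F has density f, dF = f d theta.\<close>

definition cdf :: "(real \<Rightarrow> real) \<Rightarrow> real \<Rightarrow> real" where
  "cdf f x = integral {0..x} f"

definition intF :: "(real \<Rightarrow> real) \<Rightarrow> real \<Rightarrow> real \<Rightarrow> (real \<Rightarrow> real) \<Rightarrow> real" where
  "intF f a b g = integral {a..b} (\<lambda>t. g t * f t)"

definition MPS :: "real \<Rightarrow> (real \<Rightarrow> real) \<Rightarrow> (real \<Rightarrow> real) \<Rightarrow> (real \<Rightarrow> real) set" where
  "MPS thbar f a = {b. bounded (a ` {0..thbar}) \<and> bounded (b ` {0..thbar})
      \<and> a measurable_on {0..thbar} \<and> b measurable_on {0..thbar}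
      \<and> (\<forall>x\<in>{0..thbar}. intF f x thbar b \<le> intF f x thbar a)
      \<and> intF f 0 thbar b = intF f 0 thbar a}"

definition S0 :: "real \<Rightarrow> (real \<Rightarrow> real) \<Rightarrow> (real \<Rightarrow> real) set" where
  "S0 thbar f = {s. mono_on {0..thbar} s \<and> s ` {0..thbar} \<subseteq> {0..1}
      \<and> s \<in> MPS thbar f (cdf f)}"

definition W0 :: "real \<Rightarrow> (real \<Rightarrow> real) \<Rightarrow> (real \<Rightarrow> real) \<Rightarrow> real" where
  "W0 thbar f s = intF f 0 thbar (\<lambda>t. (1 - cdf f t) / f t * s t)"

definition mean :: "real \<Rightarrow> (real \<Rightarrow> real) \<Rightarrow> real" where
  "mean thbar f = intF f 0 thbar (\<lambda>x. x)"

end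

theory Submission
  imports Defs
begin

lemma mono_integrable_prod:
  fixes s h :: "real \<Rightarrow> real"
  assumes "mono_on {a..b} s" "h integrable_on {a..b}" "a \<le> b"
  shows "(\<lambda>x. s x * h x) integrable_on {a..b}"
proof -
  have "\<And>x y. a \<le> x \<Longrightarrow> x \<le> y \<Longrightarrow> y \<le> b \<Longrightarrow> s x \<le> s y"
    using assms(1) by (auto intro: mono_onD)
  then obtain c where "c \<in> {a..b}"
    "((\<lambda>x. s x * h x) has_integral (s a * integral {a..c} h + s b * integral {c..b} h)) {a..b}"
    using second_mean_value_theorem_full[OF assms(2) assms(3), of s] by blast
  thus ?thesis by blast
qed

lemma mono_measurable:
  fixes s :: "real \<Rightarrow> real"
  assumes "mono_on {a..b} s" "a \<le> b"
  shows "s measurable_on {a..b}"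
proof -
  have "(\<lambda>x. s x * 1) integrable_on {a..b}"
    by (rule mono_integrable_prod[OF assms(1) _ assms(2)]) auto
  then have "s integrable_on {a..b}" by simp
  then show ?thesis
    by (simp add: integrable_imp_measurable measurable_on_iff_borel_measurable)
qed

lemma cont_measurable:
  fixes s :: "real \<Rightarrow> real"
  assumes "continuous_on {a..b} s"
  shows "s measurable_on {a..b}"
proof -
  have "s integrable_on {a..b}" using assms integrable_continuous_interval by blast
  then show ?thesis
    by (simp add: integrable_imp_measurable measurable_on_iff_borel_measurable)
qed

lemma step_has_integral:
  fixes h :: "real \<Rightarrow> real"
  assumes "x \<le> y" "y \<le> z" "(h has_integral I1) {x..y}" "(h has_integral I2) {y..z}"
  shows "((\<lambda>t. (if t < y then a else b) * h t) has_integral (a*I1 + b*I2)) {x..z}"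
proof -
  have 1: "((\<lambda>t. (if t < y then a else b) * h t) has_integral (a*I1)) {x..y}"
    by (rule has_integral_spike[where S="{y}" and f="\<lambda>t. a * h t"])
       (auto intro: has_integral_mult_right assms)
  have 2: "((\<lambda>t. (if t < y then a else b) * h t) has_integral (b*I2)) {y..z}"
    by (rule has_integral_spike[where S="{}" and f="\<lambda>t. b * h t"])
       (auto intro: has_integral_mult_right assms)
  show ?thesis by (rule has_integral_combine[OF assms(1,2) 1 2])
qed

context
  fixes T :: real and f :: "real \<Rightarrow> real"
  assumes T: "0 < T" and fc: "continuous_on {0..T} f"
    and fpos: "\<forall>t\<in>{0..T}. 0 < f t" and F1: "cdf f T = 1"
begin

lemma cdf_eq: "cdf f = (\<lambda>u. integral {0..u} f)"
  by (rule ext) (simp add: cdf_def)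

lemma Fder: "x \<in> {0..T} \<Longrightarrow> (cdf f has_real_derivative f x) (at x within {0..T})"
  unfolding cdf_eq has_real_derivative_iff_has_vector_derivative
  by (rule integral_has_vector_derivative[OF fc])

lemma Fcont: "continuous_on {0..T} (cdf f)"
  using Fder DERIV_continuous_on by blast

lemma F0: "cdf f 0 = 0" by (simp add: cdf_def)

lemma FTC_sub:
  fixes G g :: "real \<Rightarrow> real"
  assumes "0 \<le> u" "u \<le> v" "v \<le> T"
    and "\<And>x. x \<in> {0..T} \<Longrightarrow> (G has_real_derivative g x) (at x within {0..T})"
  shows "(g has_integral (G v - G u)) {u..v}"
proof (rule fundamental_theorem_of_calculus[OF assms(2)])
  fix x assume x: "x \<in> {u..v}"
  then have "(G has_real_derivative g x) (at x within {0..T})" using assms by (intro assms(4)) auto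
  then have "(G has_real_derivative g x) (at x within {u..v})"
    by (rule DERIV_subset) (use assms in auto)
  then show "(G has_vector_derivative g x) (at x within {u..v})"
    by (simp add: has_real_derivative_iff_has_vector_derivative)
qed

lemma Fint: "0 \<le> u \<Longrightarrow> u \<le> v \<Longrightarrow> v \<le> T \<Longrightarrow> (f has_integral (cdf f v - cdf f u)) {u..v}"
  by (rule FTC_sub) (auto intro: Fder)

lemma FFint: "0 \<le> u \<Longrightarrow> u \<le> v \<Longrightarrow> v \<le> T \<Longrightarrow>
   ((\<lambda>t. cdf f t * f t) has_integral ((cdf f v)^2/2 - (cdf f u)^2/2)) {u..v}"
proof (rule FTC_sub[where G="\<lambda>t. (cdf f t)^2/2"])
  fix x assume "x \<in> {0..T}"
  note d = Fder[OF this]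
  show "((\<lambda>t. (cdf f t)^2/2) has_real_derivative cdf f x * f x) (at x within {0..T})"
    by (rule derivative_eq_intros d | simp)+
qed

lemma xFint: "((\<lambda>t. (cdf f t - 1) + t * f t) has_integral 0) {0..T}"
proof -
  have "((\<lambda>t. (cdf f t - 1) + t * f t) has_integral (T * (cdf f T - 1) - 0 * (cdf f 0 - 1))) {0..T}"
  proof (rule FTC_sub[where G="\<lambda>t. t * (cdf f t - 1)"])
    fix x assume "x \<in> {0..T}"
    note d = Fder[OF this]
    show "((\<lambda>t. t * (cdf f t - 1)) has_real_derivative (cdf f x - 1) + x * f x) (at x within {0..T})"
      by (rule derivative_eq_intros d | simp)+
  qed (use T in auto)
  then show ?thesis using F1 by simp
qed

lemma Fmono: assumes "0 \<le> u" "u \<le> v" "v \<le> T" shows "cdf f u \<le> cdf f v"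
proof -
  have "0 \<le> cdf f v - cdf f u"
    by (rule has_integral_nonneg[OF Fint[OF assms]]) (use fpos assms in \<open>auto intro!: less_imp_le\<close>)
  then show ?thesis by simp
qed

lemma Fbounds: "x \<in> {0..T} \<Longrightarrow> 0 \<le> cdf f x \<and> cdf f x \<le> 1"
  using Fmono[of 0 x] Fmono[of x T] F0 F1 by auto

definition gg where "gg t = 1 - cdf f t - mean T f * f t"

lemma ggcont: "continuous_on {0..T} gg"
  unfolding gg_def by (intro continuous_intros Fcont fc)

lemma ggint: "gg integrable_on {a..b}" if "{a..b} \<subseteq> {0..T}" for a b
  using integrable_continuous_interval[OF continuous_on_subset[OF ggcont that]] .

lemma Gt: "t \<in> {0..T} \<Longrightarrow> intF f 0 t (\<lambda>x. (1 - cdf f x) / f x - mean T f) = integral {0..t} gg"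
  unfolding intF_def gg_def
proof (rule integral_cong)
  fix x assume "t \<in> {0..T}" "x \<in> {0..t}"
  then have "f x \<noteq> 0" using fpos by (metis atLeastAtMost_iff less_irrefl order_trans)
  then show "((1 - cdf f x) / f x - mean T f) * f x = 1 - cdf f x - mean T f * f x"
    by (simp add: field_simps)
qed

lemma gg0: "(gg has_integral 0) {0..T}"
proof -
  have m: "((\<lambda>t. t * f t) has_integral mean T f) {0..T}"
    unfolding mean_def intF_def
    by (rule integrable_integral, rule integrable_continuous_interval) (intro continuous_intros fc)
  have e: "((\<lambda>t. mean T f * f t) has_integral (mean T f * 1)) {0..T}"
    using has_integral_mult_right[OF Fint[of 0 T]] T F0 F1 by simp
  have "((\<lambda>t. - ((cdf f t - 1) + t * f t) + t * f t - mean T f * f t) has_integral (- 0 + mean T f - mean T f * 1)) {0..T}"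
    by (intro has_integral_diff has_integral_add has_integral_neg xFint m e)
  moreover have "gg = (\<lambda>t. 1 - cdf f t - mean T f * f t)" by (rule ext) (simp add: gg_def)
  ultimately show ?thesis by simp
qed

lemma Wrep:
  assumes "mono_on {0..T} s"
  shows "W0 T f s = integral {0..T} (\<lambda>x. s x * gg x) + mean T f * intF f 0 T s"
proof -
  have i1: "(\<lambda>x. s x * gg x) integrable_on {0..T}"
    using mono_integrable_prod[OF assms ggint] T by auto
  have i2: "(\<lambda>x. s x * f x) integrable_on {0..T}"
    using mono_integrable_prod[OF assms integrable_continuous_interval[OF fc]] T by auto
  have "W0 T f s = integral {0..T} (\<lambda>x. s x * gg x + mean T f * (s x * f x))"
    unfolding W0_def intF_def gg_def
  proof (rule integral_cong)
    fix x assume "x \<in> {0..T}"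
    then have "f x \<noteq> 0" using fpos by fastforce
    then show "(1 - cdf f x) / f x * s x * f x = s x * (1 - cdf f x - mean T f * f x) + mean T f * (s x * f x)"
      by (simp add: field_simps)
  qed
  also have "\<dots> = integral {0..T} (\<lambda>x. s x * gg x) + mean T f * intF f 0 T s"
    unfolding intF_def
    by (simp add: integral_add[OF i1 integrable_on_mult_right[OF i2]])
  finally show ?thesis .
qed

lemma FF: "intF f 0 T (cdf f) = 1/2"
  using FFint[of 0 T] T F0 F1 unfolding intF_def by (simp add: integral_unique)

lemma sFhalf: "s \<in> S0 T f \<Longrightarrow> intF f 0 T s = 1/2"
  using FF by (simp add: S0_def MPS_def)

lemma bnd01: fixes g :: "real \<Rightarrow> real" shows "g ` {0..T} \<subseteq> {0..1} \<Longrightarrow> bounded (g ` {0..T})"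
  by (metis bounded_closed_interval bounded_subset)

lemma Fimg: "cdf f ` {0..T} \<subseteq> {0..1}"
  using Fbounds by auto

lemma tailF: "x \<in> {0..T} \<Longrightarrow> intF f x T (cdf f) = (1 - (cdf f x)^2)/2"
  using FFint[of x T] F1 unfolding intF_def by (simp add: integral_unique)

lemma half_in: "(\<lambda>_. 1/2) \<in> S0 T f"
proof -
  have tl: "intF f x T (\<lambda>_. 1/2) = (1 - cdf f x)/2" if "x \<in> {0..T}" for x
  proof -
    have "integral {x..T} (\<lambda>t. 1/2 * f t) = 1/2 * (cdf f T - cdf f x)"
      by (rule integral_unique, rule has_integral_mult_right, rule Fint) (use that in auto)
    then show ?thesis using F1 by (simp add: intF_def)
  qed
  show ?thesis
    unfolding S0_def MPS_def
  proof (intro CollectI conjI ballI)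
    fix x assume x: "x \<in> {0..T}"
    have "cdf f x ^2 \<le> cdf f x" using Fbounds[OF x] by (simp add: power2_eq_square mult_left_le)
    then show "intF f x T (\<lambda>_. 1/2) \<le> intF f x T (cdf f)"
      using tl[OF x] tailF[OF x] by simp
  next
    show "intF f 0 T (\<lambda>_. 1/2) = intF f 0 T (cdf f)"
      using tl[of 0] tailF[of 0] T F0 by simp
  next
    show "bounded (cdf f ` {0..T})" by (rule bnd01[OF Fimg])
  next
    show "cdf f measurable_on {0..T}" by (rule cont_measurable[OF Fcont])
  next
    show "(\<lambda>_. 1/2::real) measurable_on {0..T}" by simp
  next
    show "bounded ((\<lambda>_. 1/2::real) ` {0..T})" by (rule bnd01) auto
  next
    show "mono_on {0..T} (\<lambda>_. 1/2::real)" by (simp add: mono_on_def)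
  next
    show "(\<lambda>_. 1/2::real) ` {0..T} \<subseteq> {0..1}" by auto
  qed
qed

lemma ggsplit: "c \<in> {0..T} \<Longrightarrow> integral {c..T} gg = - integral {0..c} gg"
  using Henstock_Kurzweil_Integration.integral_combine[where a=0 and c=c and b=T and f=gg] ggint[of 0 T] gg0 by (auto simp: integral_unique)

lemma Whalf: "W0 T f (\<lambda>_. 1/2) = mean T f * (1/2)"
proof -
  have "integral {0..T} (\<lambda>x. 1/2 * gg x) = 1/2 * 0"
    by (rule integral_unique, rule has_integral_mult_right, rule gg0)
  then show ?thesis using Wrep[of "\<lambda>_. 1/2"] sFhalf[OF half_in] by (simp add: mono_on_def)
qed

lemma dir1:
  assumes G: "\<forall>t\<in>{0..T}. intF f 0 t (\<lambda>x. (1 - cdf f x) / f x - mean T f) \<ge> 0"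
    and s: "s \<in> S0 T f"
  shows "W0 T f s \<le> W0 T f (\<lambda>_. 1/2)"
proof -
  have m: "mono_on {0..T} s" using s by (simp add: S0_def)
  have "\<And>x y. 0 \<le> x \<Longrightarrow> x \<le> y \<Longrightarrow> y \<le> T \<Longrightarrow> s x \<le> s y"
    using m by (auto intro: mono_onD)
  then obtain c where c: "c \<in> {0..T}"
    "((\<lambda>x. s x * gg x) has_integral (s 0 * integral {0..c} gg + s T * integral {c..T} gg)) {0..T}"
    using second_mean_value_theorem_full[OF ggint[of 0 T], of s] T by auto
  have Gc: "integral {0..c} gg \<ge> 0" using G c(1) Gt by metis
  have "s 0 \<le> s T" using m T by (auto intro: mono_onD)
  then have "integral {0..T} (\<lambda>x. s x * gg x) = (s 0 - s T) * integral {0..c} gg"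
    using integral_unique[OF c(2)] ggsplit[OF c(1)] by (simp add: algebra_simps)
  also have "\<dots> \<le> 0" using Gc \<open>s 0 \<le> s T\<close> by (simp add: mult_nonpos_nonneg)
  finally show ?thesis using Wrep[OF m] sFhalf[OF s] Whalf by simp
qed

lemma dir2:
  assumes opt: "\<forall>s\<in>S0 T f. W0 T f s \<le> W0 T f (\<lambda>_. 1/2)" and t0: "t0 \<in> {0..T}"
  shows "intF f 0 t0 (\<lambda>x. (1 - cdf f x) / f x - mean T f) \<ge> 0"
proof (rule ccontr)
  assume "\<not> ?thesis"
  then have Gneg: "integral {0..t0} gg < 0" using Gt[OF t0] by simp
  define p where "p = cdf f t0"
  define s where "s = (\<lambda>x::real. (if x < t0 then p/2 else (1+p)/2))"
  have p01: "0 \<le> p" "p \<le> 1" using Fbounds[OF t0] by (auto simp: p_def)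
  have sm: "mono_on {0..T} s" unfolding s_def mono_on_def using p01 by auto
  have simg: "s ` {0..T} \<subseteq> {0..1}" unfolding s_def using p01 by auto
  have tail: "intF f x T s = (if x < t0 then p/2*(p - cdf f x) + (1+p)/2*(1-p) else (1+p)/2 * (1 - cdf f x))"
    if x: "x \<in> {0..T}" for x
  proof (cases "x < t0")
    case True
    have "((\<lambda>t. (if t < t0 then p/2 else (1+p)/2) * f t) has_integral
           (p/2 * (cdf f t0 - cdf f x) + (1+p)/2 * (cdf f T - cdf f t0))) {x..T}"
      by (rule step_has_integral; (rule Fint)?) (use x t0 True in auto)
    then show ?thesis using True F1 unfolding intF_def s_def p_def by (simp add: integral_unique)
  next
    case False
    have "integral {x..T} (\<lambda>t. s t * f t) = integral {x..T} (\<lambda>t. (1+p)/2 * f t)"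
      by (rule integral_cong) (use False in \<open>auto simp: s_def\<close>)
    also have "\<dots> = (1+p)/2 * (cdf f T - cdf f x)"
      by (rule integral_unique, rule has_integral_mult_right, rule Fint) (use x in auto)
    finally show ?thesis using False F1 unfolding intF_def by simp
  qed
  have A: "\<forall>x\<in>{0..T}. intF f x T s \<le> intF f x T (cdf f)"
  proof
    fix x assume x: "x \<in> {0..T}"
    have Fx: "0 \<le> cdf f x" "cdf f x \<le> 1" using Fbounds[OF x] by auto
    show "intF f x T s \<le> intF f x T (cdf f)"
    proof (cases "x < t0")
      case True
      have "cdf f x \<le> p" unfolding p_def using Fmono[of x t0] x t0 True by auto
      then have "cdf f x * cdf f x \<le> p * cdf f x" using Fx by (simp add: mult_right_mono)
      moreover have "intF f x T s = 1/2 - p * cdf f x / 2" using tail[OF x] True by (simp add: field_simps)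
      ultimately show ?thesis using tailF[OF x] by (simp add: power2_eq_square field_simps)
    next
      case False
      have "p \<le> cdf f x" unfolding p_def using Fmono[of t0 x] x t0 False by auto
      then have "(1 - cdf f x) * (1 + p) \<le> (1 - cdf f x) * (1 + cdf f x)" using Fx
        by (intro mult_left_mono) auto
      then show ?thesis using tail[OF x] tailF[OF x] False
        by (simp add: power2_eq_square algebra_simps)
    qed
  qed
  have B: "intF f 0 T s = intF f 0 T (cdf f)"
  proof (cases "0 < t0")
    case True
    then show ?thesis using tail[of 0] tailF[of 0] T F0 by (simp add: field_simps)
  next
    case False
    then have "t0 = 0" using t0 by auto
    then have "p = 0" using F0 p_def by simp
    then show ?thesis using tail[of 0] tailF[of 0] T F0 False by simp
  qed
  have sS: "s \<in> S0 T f"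
    unfolding S0_def MPS_def
    using sm simg bnd01[OF simg] bnd01[OF Fimg] mono_measurable[OF sm less_imp_le[OF T]]
      cont_measurable[OF Fcont] A B by simp
  have "((\<lambda>t. (if t < t0 then p/2 else (1+p)/2) * gg t) has_integral
           (p/2 * integral {0..t0} gg + (1+p)/2 * integral {t0..T} gg)) {0..T}"
    by (rule step_has_integral; (rule integrable_integral, rule ggint)?) (use t0 in auto)
  then have "integral {0..T} (\<lambda>x. s x * gg x) = - integral {0..t0} gg / 2"
    using ggsplit[OF t0] unfolding s_def by (simp add: integral_unique algebra_simps)
  moreover have "W0 T f s \<le> W0 T f (\<lambda>_. 1/2)" using opt sS by blast
  ultimately show False using Wrep[OF sm] sFhalf[OF sS] Whalf Gneg by simp
qed

end

theorem mainTheorem15: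
  fixes thbar :: real and f :: "real \<Rightarrow> real"
  assumes "0 < thbar"
    and "continuous_on {0..thbar} f"
    and "\<forall>t\<in>{0..thbar}. 0 < f t"
    and "cdf f thbar = 1"
  shows "((\<lambda>_. 1/2) \<in> S0 thbar f \<and> (\<forall>s\<in>S0 thbar f. W0 thbar f s \<le> W0 thbar f (\<lambda>_. 1/2)))
     \<longleftrightarrow> (\<forall>t\<in>{0..thbar}.
            intF f 0 t (\<lambda>x. (1 - cdf f x) / f x - mean thbar f) \<ge> 0)"
  using half_in[OF assms] dir1[OF assms] dir2[OF assms] by blast

end
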